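(* Let $\varphi$ be a primitive $k$-uniform morphism on $\{0,1\}$ and let $w$ be an infinite fixed point of $\varphi$. The following are equivalent: 1. $w$ is bounded weak abelian periodic; 2. $w$ is abelian periodic; 3. $\varphi(0)\sim_{ab}\varphi(1)$, or $k$ is odd and $\varphi(0)=(01)^{\frac{k-1}{2}}0$, $\varphi(1)=(10)^{\frac{k-1}{2}}1$.
   Context: A morphism $\varphi$ on $\{0,1\}^*$ is $k$-uniform if $|\varphi(0)|=|\varphi(1)|=k$, and primitive if for some $m$ both $\varphi^m(0)$ and $\varphi^m(1)$ contain both letters. $|u|_a$ is the number of occurrences of letter $a$ in $u$; $u\sim_{ab}v$ (abelian equivalent) means $|u|_a=|v|_a$ for every letter $a$. For nonempty finite $u$, $\rho_a(u)=|u|_a/|u|$. An infinite word $w$ is abelian (ultimately) periodic if $w=v_0v_1v_2\cdots$ with finite words $v_i$ such that $v_i\sim_{ab}v_j$ for all $i,j\ge1$. It is weak abelian periodic if $w=v_0v_1v_2\cdots$ with $v_0$ finite and $v_1,v_2,\dots$ nonempty finite words with $\rho_a(v_i)=\rho_a(v_j)$ for all letters $a$ and all $i,j\ge1$, and bounded weak abelian periodic if such a factorization exists with $|v_i|\le C$ for all $i$ for some constant $C$. *)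

theory Defs
  imports Complex_Main
begin

text \<open>Words over the alphabet {0,1} are lists of naturals with letters in {0,1};
infinite words are functions nat => nat. A morphism is given by the images
phi 0 and phi 1 of the two letters.\<close>

definition morph :: "(nat \<Rightarrow> nat list) \<Rightarrow> nat list \<Rightarrow> nat list" where
  "morph phi xs = concat (map phi xs)"

definition binary_word :: "nat list \<Rightarrow> bool" where
  "binary_word u \<longleftrightarrow> set u \<subseteq> {0, 1}"

definition binary_morphism :: "(nat \<Rightarrow> nat list) \<Rightarrow> bool" where
  "binary_morphism phi \<longleftrightarrow> binary_word (phi 0) \<and> binary_word (phi 1)"

definition uniform_morphism :: "nat \<Rightarrow> (nat \<Rightarrow> nat list) \<Rightarrow> bool" where
  "uniform_morphism k phi \<longleftrightarrow> length (phi 0) = k \<and> length (phi 1) = k"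

definition primitive_morphism :: "(nat \<Rightarrow> nat list) \<Rightarrow> bool" where
  "primitive_morphism phi \<longleftrightarrow>
     (\<exists>m. \<forall>a\<in>{0::nat,1}. \<forall>b\<in>{0::nat,1}. b \<in> set ((morph phi ^^ m) [a]))"

definition factor :: "(nat \<Rightarrow> nat) \<Rightarrow> nat \<Rightarrow> nat \<Rightarrow> nat list" where
  "factor w i j = map w [i..<j]"

definition binary_infinite_word :: "(nat \<Rightarrow> nat) \<Rightarrow> bool" where
  "binary_infinite_word w \<longleftrightarrow> (\<forall>n. w n \<in> {0, 1})"

text \<open>phi(w) = w: the image of every prefix of w is a prefix of w.\<close>
definition fixed_point :: "(nat \<Rightarrow> nat list) \<Rightarrow> (nat \<Rightarrow> nat) \<Rightarrow> bool" where
  "fixed_point phi w \<longleftrightarrow>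
     (\<forall>n. morph phi (factor w 0 n) = factor w 0 (length (morph phi (factor w 0 n))))"

definition abelian_equiv :: "nat list \<Rightarrow> nat list \<Rightarrow> bool" where
  "abelian_equiv u v \<longleftrightarrow> (\<forall>a. count_list u a = count_list v a)"

definition rho :: "nat \<Rightarrow> nat list \<Rightarrow> real" where
  "rho a u = real (count_list u a) / real (length u)"

text \<open>A factorization w = v0 v1 v2 ... with v1, v2, ... nonempty is given by a strictly
increasing sequence of cut points p: v0 = w[0..p 0), and v_(i+1) = w[p i .. p (i+1)).\<close>
definition block :: "(nat \<Rightarrow> nat) \<Rightarrow> (nat \<Rightarrow> nat) \<Rightarrow> nat \<Rightarrow> nat list" where
  "block w p i = factor w (p i) (p (Suc i))"

definition abelian_periodic :: "(nat \<Rightarrow> nat) \<Rightarrow> bool" where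
  "abelian_periodic w \<longleftrightarrow>
     (\<exists>p. strict_mono p \<and> (\<forall>i j. abelian_equiv (block w p i) (block w p j)))"

definition weak_abelian_periodic :: "(nat \<Rightarrow> nat) \<Rightarrow> bool" where
  "weak_abelian_periodic w \<longleftrightarrow>
     (\<exists>p. strict_mono p \<and> (\<forall>i j a. rho a (block w p i) = rho a (block w p j)))"

definition bounded_weak_abelian_periodic :: "(nat \<Rightarrow> nat) \<Rightarrow> bool" where
  "bounded_weak_abelian_periodic w \<longleftrightarrow>
     (\<exists>p C. strict_mono p \<and> (\<forall>i j a. rho a (block w p i) = rho a (block w p j))
            \<and> (\<forall>i. length (block w p i) \<le> C))"

end

theory Submission imports Defs begin

lemma morph_append[simp]: "morph phi (xs @ ys) = morph phi xs @ morph phi ys"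
  by (simp add: morph_def)
lemma morph_Nil[simp]: "morph phi [] = []" by (simp add: morph_def)
lemma morph_Cons[simp]: "morph phi (x # xs) = phi x @ morph phi xs" by (simp add: morph_def)

lemma factor_split: "i \<le> j \<Longrightarrow> j \<le> l \<Longrightarrow> factor w i l = factor w i j @ factor w j l"
  unfolding factor_def by (metis map_append upt_add_eq_append le_add_diff_inverse)

lemma factor_Suc: "factor w 0 (Suc n) = factor w 0 n @ [w n]"
  unfolding factor_def by simp

lemma length_factor[simp]: "length (factor w i j) = j - i" by (simp add: factor_def)

lemma take_factor: "t \<le> n \<Longrightarrow> take t (factor w 0 n) = factor w 0 t"
  unfolding factor_def by (simp add: take_map)

lemma par_aux: "(x::nat) \<in> {0,1} \<Longrightarrow> (if even t then x else 1 - x) = (x + t) mod 2"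
  apply (cases "even t") apply (auto simp: even_iff_mod_2_eq_zero odd_iff_mod_2_eq_one) apply (simp add: mod_Suc) done

lemma len_binary: "set (u::nat list) \<subseteq> {0,1} \<Longrightarrow> length u = count_list u 0 + count_list u 1"
  using sum_count_set[of u "{0,1::nat}"] by simp

lemma concat_rep_nth: "i < 2*h \<Longrightarrow> concat (replicate h [a,b]) ! i = (if even i then a else b)"
proof (induction h arbitrary: i)
  case (Suc h)
  show ?case
  proof (cases "i < 2")
    case True then show ?thesis by (cases i) (auto simp: less_2_cases_iff)
  next
    case False
    then have "concat (replicate (Suc h) [a,b]) ! i = concat (replicate h [a,b]) ! (i - 2)"
      by (simp add: nth_append numeral_2_eq_2)
    moreover have "even (i-2) \<longleftrightarrow> even i" using False by presburger
    moreover have "i - 2 < 2*h" using Suc.prems False by simp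
    ultimately show ?thesis using Suc.IH by simp
  qed
qed simp

lemma len_concat_rep[simp]: "length (concat (replicate h [a,b])) = 2*h"
  by (induction h) auto

lemma F_step:
  assumes "t < length xs" "xs ! t \<in> {0,1::nat}"
  shows "real (count_list (take (Suc t) xs) 0) - r * real (Suc t)
       = real (count_list (take t xs) 0) - r * real t + (if xs ! t = 0 then 1 else 0) - r"
  using assms by (auto simp: take_Suc_conv_app_nth algebra_simps)

lemma shape:
  fixes P0 P1 :: "nat list" and r :: real
  assumes len: "length P0 = k" "length P1 = k" and k2: "k \<ge> 2"
    and sP: "set P0 \<subseteq> {0,1}" "set P1 \<subseteq> {0,1}" and r: "0 < r" "r < 1"
    and A0: "\<forall>t\<le>k. real (count_list (take t P0) 0) - r * real t \<ge> 0"
    and A1: "\<forall>t\<le>k. real (count_list (take t P1) 0) - r * real t \<le> 0"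
    and B0: "\<forall>t<k. P0 ! t = 0 \<longrightarrow> real (count_list (take t P0) 0) - r * real t \<le> 0"
    and B1: "\<forall>t<k. P1 ! t = 1 \<longrightarrow> real (count_list (take t P1) 0) - r * real t \<ge> 0"
    and E0: "real (count_list (take k P0) 0) - r * real k = 1 - r"
  shows "odd k \<and> P0 = concat (replicate ((k-1) div 2) [0,1]) @ [0]
              \<and> P1 = concat (replicate ((k-1) div 2) [1,0]) @ [1]"
proof -
  define F where "F xs t = real (count_list (take t xs) 0) - r * real t" for xs :: "nat list" and t
  have in0: "P0 ! t \<in> {0,1}" if "t < k" for t using sP(1) len(1) that nth_mem by blast
  have in1: "P1 ! t \<in> {0,1}" if "t < k" for t using sP(2) len(2) that nth_mem by blast
  have st0: "F P0 (Suc t) = F P0 t + (if P0 ! t = 0 then 1 else 0) - r" if "t < k" for t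
    unfolding F_def using F_step[of t P0 r] in0[OF that] len that by simp
  have st1: "F P1 (Suc t) = F P1 t + (if P1 ! t = 0 then 1 else 0) - r" if "t < k" for t
    unfolding F_def using F_step[of t P1 r] in1[OF that] len that by simp
  have F00: "F xs 0 = 0" for xs by (simp add: F_def)
  have a0: "F P0 t \<ge> 0" if "t \<le> k" for t using A0 that F_def by simp
  have a1: "F P1 t \<le> 0" if "t \<le> k" for t using A1 that F_def by simp
  have b0: "F P0 t \<le> 0" if "t < k" "P0 ! t = 0" for t using B0 that F_def by simp
  have b1: "F P1 t \<ge> 0" if "t < k" "P1 ! t = 1" for t using B1 that F_def by simp
  have p00: "P0 ! 0 = 0"
  proof (rule ccontr)
    assume "P0 ! 0 \<noteq> 0"
    then have "F P0 1 = - r" using st0[of 0] k2 F00 by simp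
    then show False using a0[of 1] k2 r by simp
  qed
  have F01: "F P0 1 = 1 - r" using st0[of 0] k2 F00 p00 by simp
  have p01: "P0 ! 1 \<noteq> 0" using b0[of 1] F01 r k2 by auto
  have F02: "F P0 2 = 1 - 2*r" using st0[of 1] k2 F01 p01 by (simp add: numeral_2_eq_2)
  have p10: "P1 ! 0 \<noteq> 0"
  proof
    assume "P1 ! 0 = 0"
    then have "F P1 1 = 1 - r" using st1[of 0] k2 F00 by simp
    then show False using a1[of 1] k2 r by simp
  qed
  have F11: "F P1 1 = - r" using st1[of 0] k2 F00 p10 by simp
  have p11: "P1 ! 1 = 0"
  proof (rule ccontr)
    assume "P1 ! 1 \<noteq> 0"
    then have "P1 ! 1 = 1" using in1[of 1] k2 by auto
    then show False using b1[of 1] F11 r k2 by auto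
  qed
  have F12: "F P1 2 = 1 - 2*r" using st1[of 1] k2 F11 p11 by (simp add: numeral_2_eq_2)
  have rh: "r = 1/2" using a0[of 2] a1[of 2] F02 F12 k2 by simp
  have I0: "t \<le> k \<longrightarrow> F P0 t = (if even t then 0 else 1/2) \<and> (\<forall>s<t. P0 ! s = s mod 2)" for t
  proof (induction t)
    case 0 then show ?case using F00 by simp
  next
    case (Suc t)
    show ?case
    proof
      assume t: "Suc t \<le> k"
      then have IH: "F P0 t = (if even t then 0 else 1/2)" "\<forall>s<t. P0 ! s = s mod 2" using Suc by auto
      show "F P0 (Suc t) = (if even (Suc t) then 0 else 1/2) \<and> (\<forall>s<Suc t. P0 ! s = s mod 2)"
      proof (cases "even t")
        case True
        have "P0 ! t = 0"
        proof (rule ccontr)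
          assume "P0 ! t \<noteq> 0"
          then have "F P0 (Suc t) = - 1/2" using st0[of t] t IH True rh by simp
          then show False using a0[of "Suc t"] t by simp
        qed
        then show ?thesis using st0[of t] t IH True rh by (auto simp: less_Suc_eq)
      next
        case False
        have "P0 ! t \<noteq> 0" using b0[of t] t IH False by auto
        then have "P0 ! t = 1" using in0[of t] t by auto
        then show ?thesis using st0[of t] t IH False rh
          by (auto simp: less_Suc_eq odd_iff_mod_2_eq_one)
      qed
    qed
  qed
  have I1: "t \<le> k \<longrightarrow> F P1 t = (if even t then 0 else -1/2) \<and> (\<forall>s<t. P1 ! s = 1 - s mod 2)" for t
  proof (induction t)
    case 0 then show ?case using F00 by simp
  next
    case (Suc t)
    show ?case
    proof
      assume t: "Suc t \<le> k"
      then have IH: "F P1 t = (if even t then 0 else -1/2)" "\<forall>s<t. P1 ! s = 1 - s mod 2" using Suc by auto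
      show "F P1 (Suc t) = (if even (Suc t) then 0 else -1/2) \<and> (\<forall>s<Suc t. P1 ! s = 1 - s mod 2)"
      proof (cases "even t")
        case True
        have "P1 ! t \<noteq> 0"
        proof
          assume "P1 ! t = 0"
          then have "F P1 (Suc t) = 1/2" using st1[of t] t IH True rh by simp
          then show False using a1[of "Suc t"] t by simp
        qed
        then have "P1 ! t = 1" using in1[of t] t by auto
        then show ?thesis using st1[of t] t IH True rh by (auto simp: less_Suc_eq)
      next
        case False
        have "P1 ! t = 0"
        proof (rule ccontr)
          assume "P1 ! t \<noteq> 0"
          then have "P1 ! t = 1" using in1[of t] t by auto
          then show False using b1[of t] t IH False by auto
        qed
        then show ?thesis using st1[of t] t IH False rh
          by (auto simp: less_Suc_eq odd_iff_mod_2_eq_one)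
      qed
    qed
  qed
  have ok: "odd k"
  proof (rule ccontr)
    assume "\<not> odd k"
    then have "F P0 k = 0" using I0[of k] by simp
    then show False using E0 F_def r by simp
  qed
  define h where "h = (k - 1) div 2"
  have kh: "k = 2*h+1" using ok unfolding h_def by presburger
  have n0: "\<forall>s<k. P0 ! s = s mod 2" using I0[of k] by simp
  have n1: "\<forall>s<k. P1 ! s = 1 - s mod 2" using I1[of k] by simp
  have e0: "P0 = concat (replicate h [0,1]) @ [0]"
  proof (rule nth_equalityI)
    show "length P0 = length (concat (replicate h [0,1]) @ [0::nat])" using len kh by simp
    fix i assume "i < length P0"
    then have i: "i < 2*h+1" using len kh by simp
    show "P0 ! i = (concat (replicate h [0,1]) @ [0]) ! i"
    proof (cases "i < 2*h")
      case True then show ?thesis using n0 i kh by (auto simp: nth_append concat_rep_nth even_iff_mod_2_eq_zero odd_iff_mod_2_eq_one)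
    next
      case False then have "i = 2*h" using i by simp
      then show ?thesis using n0 kh by (simp add: nth_append)
    qed
  qed
  have e1: "P1 = concat (replicate h [1,0]) @ [1]"
  proof (rule nth_equalityI)
    show "length P1 = length (concat (replicate h [1,0]) @ [1::nat])" using len kh by simp
    fix i assume "i < length P1"
    then have i: "i < 2*h+1" using len kh by simp
    show "P1 ! i = (concat (replicate h [1,0]) @ [1]) ! i"
    proof (cases "i < 2*h")
      case True then show ?thesis using n1 i kh by (auto simp: nth_append concat_rep_nth even_iff_mod_2_eq_zero odd_iff_mod_2_eq_one)
    next
      case False then have "i = 2*h" using i by simp
      then show ?thesis using n1 kh by (simp add: nth_append)
    qed
  qed
  show ?thesis using ok e0 e1 h_def by simp
qed


locale fpw =
  fixes phi :: "nat \<Rightarrow> nat list" and k :: nat and w :: "nat \<Rightarrow> nat"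
  assumes bm: "binary_morphism phi"
    and um: "uniform_morphism k phi"
    and pm: "primitive_morphism phi"
    and bw: "binary_infinite_word w"
    and fp: "fixed_point phi w"
begin

lemma w01: "w n \<in> {0,1}" using bw by (simp add: binary_infinite_word_def)
lemma set_phi: "x \<in> {0,1} \<Longrightarrow> set (phi x) \<subseteq> {0,1}"
  using bm by (auto simp: binary_morphism_def binary_word_def)
lemma len_phi: "x \<in> {0,1} \<Longrightarrow> length (phi x) = k"
  using um by (auto simp: uniform_morphism_def)

lemma set_morph: "set xs \<subseteq> {0,1} \<Longrightarrow> set (morph phi xs) \<subseteq> {0,1}"
  using set_phi by (induction xs) auto

lemma len_morph: "set xs \<subseteq> {0,1} \<Longrightarrow> length (morph phi xs) = k * length xs"
  using len_phi by (induction xs) auto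

lemma set_pow: "set xs \<subseteq> {0,1} \<Longrightarrow> set ((morph phi ^^ m) xs) \<subseteq> {0,1}"
proof (induction m)
  case (Suc m) then show ?case using set_morph[of "(morph phi ^^ m) xs"] by simp
qed simp

lemma len_pow: "set xs \<subseteq> {0,1} \<Longrightarrow> length ((morph phi ^^ m) xs) = k ^ m * length xs"
proof (induction m)
  case (Suc m) then show ?case using set_pow[OF Suc.prems, of m] len_morph by simp
qed simp

lemma set_factor: "set (factor w i j) \<subseteq> {0,1}"
  unfolding factor_def set_map image_subset_iff using w01 by blast

lemma k_ge2: "k \<ge> 2"
proof (rule ccontr)
  assume "\<not> k \<ge> 2"
  obtain m where m: "\<forall>a\<in>{0::nat,1}. \<forall>b\<in>{0::nat,1}. b \<in> set ((morph phi ^^ m) [a])"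
    using pm by (auto simp: primitive_morphism_def)
  have "length ((morph phi ^^ m) [0]) = k ^ m" using len_pow[of "[0]" m] by simp
  moreover have "k ^ m \<le> 1" using \<open>\<not> k \<ge> 2\<close>
    by (cases "k = 0") (auto simp: power_0_left, metis One_nat_def Suc_1 less_2_cases_iff not_le power_one order_refl)
  ultimately have L: "length ((morph phi ^^ m) [0]) \<le> 1" by simp
  have "0 \<in> set ((morph phi ^^ m) [0])" "1 \<in> set ((morph phi ^^ m) [0])" using m by auto
  moreover have "\<And>xs::nat list. length xs \<le> 1 \<Longrightarrow> xs = [] \<or> (\<exists>x. xs = [x])"
    by (case_tac xs) auto
  ultimately show False using L by fastforce
qed

lemma prefix_k: "factor w 0 (k*n) = morph phi (factor w 0 n)"
  using fp len_morph[OF set_factor[of 0 n]] unfolding fixed_point_def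
  by (metis length_factor minus_nat.diff_0)

lemma prefix_kt: "t \<le> k \<Longrightarrow> factor w 0 (k*n+t) = morph phi (factor w 0 n) @ take t (phi (w n))"
proof -
  assume t: "t \<le> k"
  have "factor w 0 (k*Suc n) = morph phi (factor w 0 n) @ phi (w n)"
    using prefix_k[of "Suc n"] by (simp add: factor_Suc)
  then have "take (k*n+t) (factor w 0 (k*Suc n)) = morph phi (factor w 0 n) @ take t (phi (w n))"
    using len_morph[OF set_factor[of 0 n]] by simp
  moreover have "take (k*n+t) (factor w 0 (k*Suc n)) = factor w 0 (k*n+t)"
    using t by (intro take_factor) simp
  ultimately show ?thesis by simp
qed

lemma w_kt: "t < k \<Longrightarrow> w (k*n+t) = phi (w n) ! t"
proof -
  assume t: "t < k"
  have "factor w 0 (k*n+Suc t) = morph phi (factor w 0 n) @ take (Suc t) (phi (w n))"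
    using t by (intro prefix_kt) simp
  then have "factor w 0 (k*n+t) @ [w (k*n+t)] = morph phi (factor w 0 n) @ take (Suc t) (phi (w n))"
    by (simp add: factor_Suc)
  moreover have "take (Suc t) (phi (w n)) = take t (phi (w n)) @ [phi (w n) ! t]"
    using t len_phi[OF w01] by (simp add: take_Suc_conv_app_nth)
  ultimately show ?thesis using prefix_kt[of t n] t by simp
qed

lemma block_k: "factor w (k*n) (k*n+k) = phi (w n)"
proof -
  have "factor w 0 (k*n+k) = factor w 0 (k*n) @ factor w (k*n) (k*n+k)"
    by (rule factor_split) auto
  then show ?thesis using prefix_kt[of k n] prefix_k[of n] len_phi[OF w01] by simp
qed

lemma w0: "w 0 = phi (w 0) ! 0"
  using w_kt[of 0 0] k_ge2 by simp


lemma w_kt': "t < k \<Longrightarrow> w (n*k+t) = phi (w n) ! t"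
  using w_kt by (metis mult.commute)

lemma dir3_ab:
  assumes "abelian_equiv (phi 0) (phi 1)"
  shows "abelian_periodic w"
proof -
  have sm: "strict_mono (\<lambda>i. k*i)" using k_ge2 by (intro strict_monoI) simp
  have bl: "block w (\<lambda>i. k*i) i = phi (w i)" for i
    using block_k[of i] by (simp add: block_def add.commute)
  have "abelian_equiv (phi (w i)) (phi (w j))" for i j
    using w01[of i] w01[of j] assms by (auto simp: abelian_equiv_def)
  then show ?thesis unfolding abelian_periodic_def using sm bl by metis
qed

lemma dir3_sp:
  assumes "odd k" "phi 0 = concat (replicate ((k - 1) div 2) [0, 1]) @ [0]"
    "phi 1 = concat (replicate ((k - 1) div 2) [1, 0]) @ [1]"
  shows "abelian_periodic w"
proof -
  define h where "h = (k - 1) div 2"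
  have kh: "k = 2*h+1" using assms(1) unfolding h_def by presburger
  have ph: "phi x ! t = (x + t) mod 2" if "x \<in> {0,1}" "t < k" for x t
  proof (cases "t < 2*h")
    case True
    then have "phi x ! t = (if even t then x else 1 - x)" using that assms(2,3) h_def
      by (auto simp: nth_append concat_rep_nth)
    moreover have "(if even t then x else 1 - x) = (x + t) mod 2" using that(1) by (rule par_aux)
    ultimately show ?thesis by (rule trans)
  next
    case False then have "t = 2*h" using that kh by simp
    then show ?thesis using that assms(2,3) h_def by (auto simp: nth_append)
  qed
  have wm: "w m = (w 0 + m) mod 2" for m
  proof (induction m rule: less_induct)
    case (less m)
    show ?case
    proof (cases "m = 0")
      case True then show ?thesis using w01[of 0] by auto
    next
      case False
      have lt: "m div k < m" using False k_ge2 by simp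
      have "w m = phi (w (m div k)) ! (m mod k)"
        using w_kt'[of "m mod k" "m div k"] k_ge2 by simp
      also have "\<dots> = (w (m div k) + m mod k) mod 2" using ph[OF w01] k_ge2 by simp
      also have "\<dots> = (w 0 + m div k + m mod k) mod 2" using less.IH[OF lt] by (simp add: mod_add_left_eq)
      also have "\<dots> = (w 0 + m) mod 2"
      proof -
        have e: "(m div k)*k = m div k + (m div k * h) * 2" using kh by (simp add: algebra_simps)
        have "w 0 + m = (w 0 + m div k + m mod k) + (m div k * h) * 2"
          using div_mult_mod_eq[of m k] e by linarith
        then show ?thesis by (simp only: mod_mult_self1)
      qed
      finally show ?thesis .
    qed
  qed
  have sm: "strict_mono (\<lambda>i. 2*i :: nat)" by (intro strict_monoI) simp
  have bl: "block w (\<lambda>i. 2*i) i = [w 0 mod 2, (w 0 + 1) mod 2]" for i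
    unfolding block_def factor_def using wm[of "2*i"] wm[of "2*i+1"]
    apply (simp add: upt_rec) done
  show ?thesis unfolding abelian_periodic_def
    by (rule exI[of _ "\<lambda>i. 2*i"]) (simp add: sm bl abelian_equiv_def)
qed


lemma not_const0: "1 \<in> set (phi 0)"
proof (rule ccontr)
  assume a: "1 \<notin> set (phi 0)"
  then have s0: "set (phi 0) \<subseteq> {0}" using set_phi[of 0] by auto
  have "set ((morph phi ^^ m) [0]) \<subseteq> {0}" for m
  proof (induction m)
    case (Suc m)
    have "set (morph phi xs) \<subseteq> {0}" if "set xs \<subseteq> {0}" for xs
      using that s0 by (induction xs) auto
    then show ?case using Suc by simp
  qed simp
  moreover obtain m where "\<forall>a\<in>{0::nat,1}. \<forall>b\<in>{0::nat,1}. b \<in> set ((morph phi ^^ m) [a])"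
    using pm by (auto simp: primitive_morphism_def)
  ultimately show False by auto
qed

lemma not_const1: "0 \<in> set (phi 1)"
proof (rule ccontr)
  assume a: "0 \<notin> set (phi 1)"
  then have s0: "set (phi 1) \<subseteq> {1}" using set_phi[of 1] by auto
  have "set ((morph phi ^^ m) [1]) \<subseteq> {1}" for m
  proof (induction m)
    case (Suc m)
    have "set (morph phi xs) \<subseteq> {1}" if "set xs \<subseteq> {1}" for xs
      using that s0 by (induction xs) auto
    then show ?case using Suc by simp
  qed simp
  moreover obtain m where "\<forall>a\<in>{0::nat,1}. \<forall>b\<in>{0::nat,1}. b \<in> set ((morph phi ^^ m) [a])"
    using pm by (auto simp: primitive_morphism_def)
  ultimately show False by auto
qed

lemma count_morph: "set xs \<subseteq> {0,1} \<Longrightarrow>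
   count_list (morph phi xs) 0 = count_list (phi 0) 0 * count_list xs 0 + count_list (phi 1) 0 * count_list xs 1"
  by (induction xs) auto

lemma N0_kt:
  assumes "t \<le> k"
  shows "real (count_list (factor w 0 (k*n+t)) 0) =
    real (count_list (phi 0) 0) * real (count_list (factor w 0 n) 0)
    + real (count_list (phi 1) 0) * (real n - real (count_list (factor w 0 n) 0))
    + real (count_list (take t (phi (w n))) 0)"
proof -
  have l: "length (factor w 0 n) = count_list (factor w 0 n) 0 + count_list (factor w 0 n) 1"
    using len_binary[OF set_factor] .
  then have "real (count_list (factor w 0 n) 1) = real n - real (count_list (factor w 0 n) 0)" by simp
  then show ?thesis using prefix_kt[OF assms, of n] count_morph[OF set_factor[of 0 n]] by simp
qed

lemma ex_block: assumes "strict_mono (p::nat\<Rightarrow>nat)" "p 0 \<le> n" shows "\<exists>i. p i \<le> n \<and> n < p (Suc i)"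
  using assms(2)
proof (induction n rule: dec_induct)
  case base then show ?case using strict_monoD[OF assms(1), of 0 1] by (intro exI[of _ 0]) simp
next
  case (step n)
  then obtain i where i: "p i \<le> n" "n < p (Suc i)" by auto
  show ?case
  proof (cases "Suc n < p (Suc i)")
    case True then show ?thesis using i by (intro exI[of _ i]) simp
  next
    case False then have "Suc n = p (Suc i)" using i by simp
    then show ?thesis using strict_monoD[OF assms(1), of "Suc i" "Suc (Suc i)"] by (intro exI[of _ "Suc i"]) simp
  qed
qed

lemma count_factor_diff: "m \<le> n \<Longrightarrow> count_list (factor w 0 n) 0 = count_list (factor w 0 m) 0 + count_list (factor w m n) 0"
  using factor_split[of 0 m n w] by simp

lemma bounded_D:
  assumes "bounded_weak_abelian_periodic w"
  shows "\<exists>r B. \<forall>n. \<bar>real (count_list (factor w 0 n) 0) - r * real n\<bar> \<le> B"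
proof -
  obtain p C where p: "strict_mono p" "\<forall>i j a. rho a (block w p i) = rho a (block w p j)"
    "\<forall>i. length (block w p i) \<le> C"
    using assms by (auto simp: bounded_weak_abelian_periodic_def)
  define r where "r = rho 0 (block w p 0)"
  define D where "D n = real (count_list (factor w 0 n) 0) - r * real n" for n
  have lenb: "length (block w p i) = p (Suc i) - p i" for i by (simp add: block_def)
  have pos: "p i < p (Suc i)" for i using p(1) by (simp add: strict_mono_def)
  have cb: "real (count_list (block w p i) 0) = r * (real (p (Suc i)) - real (p i))" for i
  proof -
    have "rho 0 (block w p i) = r" using p(2) r_def by simp
    then show ?thesis using pos[of i] lenb[of i] unfolding rho_def
      by (simp add: field_simps of_nat_diff less_imp_le)
  qed
  have Dp: "D (p i) = D (p 0)" for i
  proof (induction i)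
    case (Suc i)
    have "count_list (factor w 0 (p (Suc i))) 0 = count_list (factor w 0 (p i)) 0 + count_list (block w p i) 0"
      using count_factor_diff[of "p i" "p (Suc i)"] pos[of i] by (simp add: block_def)
    then have "D (p (Suc i)) = D (p i)" using cb[of i] unfolding D_def by (simp add: algebra_simps)
    then show ?case using Suc by simp
  qed simp
  have lip: "\<bar>D n - D m\<bar> \<le> (1 + \<bar>r\<bar>) * (real n - real m)" if "m \<le> n" for m n
  proof -
    have c: "count_list (factor w 0 n) 0 = count_list (factor w 0 m) 0 + count_list (factor w m n) 0"
      using count_factor_diff[OF that] .
    have "count_list (factor w m n) 0 \<le> n - m" using count_le_length[of "factor w m n" 0] by simp
    then have c2: "real (count_list (factor w m n) 0) \<le> real n - real m" using that by linarith
    have "D n - D m = real (count_list (factor w m n) 0) - r * (real n - real m)"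
      unfolding D_def using c by (simp add: algebra_simps)
    moreover have "\<bar>r * (real n - real m)\<bar> \<le> \<bar>r\<bar> * (real n - real m)"
      using that by (simp add: abs_mult)
    ultimately show ?thesis using c2 by (simp add: algebra_simps)
  qed
  have "\<bar>D n\<bar> \<le> \<bar>D (p 0)\<bar> + (1 + \<bar>r\<bar>) * (real C + real (p 0))" for n
  proof (cases "n < p 0")
    case True
    have "D 0 = 0" by (simp add: D_def factor_def)
    then have "\<bar>D n\<bar> \<le> (1 + \<bar>r\<bar>) * real n" using lip[of 0 n] by simp
    also have "\<dots> \<le> (1 + \<bar>r\<bar>) * (real C + real (p 0))" using True
      by (intro mult_left_mono) auto
    finally show ?thesis by simp
  next
    case False
    then obtain i where i: "p i \<le> n" "n < p (Suc i)" using ex_block[OF p(1), of n] by auto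
    have "n - p i \<le> C" using p(3) lenb[of i] i by (metis diff_le_mono less_imp_le order_trans)
    then have "real n - real (p i) \<le> real C" using i by linarith
    then have "(1 + \<bar>r\<bar>) * (real n - real (p i)) \<le> (1 + \<bar>r\<bar>) * (real C + real (p 0))"
      by (intro mult_left_mono) auto
    then show ?thesis using lip[OF i(1)] Dp[of i] by linarith
  qed
  then show ?thesis unfolding D_def by blast
qed


lemma take1: "xs \<noteq> [] \<Longrightarrow> count_list (take 1 xs) 0 = (if xs ! 0 = 0 then 1 else 0)"
  by (cases xs) auto

lemma ext_max: "finite (f ` S) \<Longrightarrow> x \<in> S \<Longrightarrow> \<exists>n\<in>S. \<forall>m\<in>S. (f m :: real) \<le> f n"
proof -
  assume f: "finite (f ` S)" and x: "x \<in> S"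
  have "Max (f ` S) \<in> f ` S" using f x by (intro Max_in) auto
  then obtain n where "n \<in> S" "f n = Max (f ` S)" by auto
  then show ?thesis using f by (metis Max_ge image_eqI)
qed

lemma ext_min: "finite (f ` S) \<Longrightarrow> x \<in> S \<Longrightarrow> \<exists>n\<in>S. \<forall>m\<in>S. (f n :: real) \<le> f m"
proof -
  assume f: "finite (f ` S)" and x: "x \<in> S"
  have "Min (f ` S) \<in> f ` S" using f x by (intro Min_in) auto
  then obtain n where "n \<in> S" "f n = Min (f ` S)" by auto
  then show ?thesis using f by (metis Min_le image_eqI)
qed

lemma hard:
  assumes bwp: "bounded_weak_abelian_periodic w" and nae: "\<not> abelian_equiv (phi 0) (phi 1)"
  shows "odd k \<and> phi 0 = concat (replicate ((k - 1) div 2) [0, 1]) @ [0]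
                      \<and> phi 1 = concat (replicate ((k - 1) div 2) [1, 0]) @ [1]"
proof -
  obtain r B where bd: "\<forall>n. \<bar>real (count_list (factor w 0 n) 0) - r * real n\<bar> \<le> B"
    using bounded_D[OF bwp] by blast
  define a where "a = count_list (phi 0) 0"
  define b where "b = count_list (phi 1) 0"
  define eps where "eps = real a - real b"
  define e where "e = real b - r * (real k - eps)"
  define D where "D n = real (count_list (factor w 0 n) 0) - r * real n" for n
  define F where "F x t = real (count_list (take t (phi x)) 0) - r * real t" for x t
  have DB: "\<bar>D n\<bar> \<le> B" for n using bd D_def by simp
  have key: "D (k*n+t) = eps * D n + e * real n + F (w n) t" if "t \<le> k" for n t
    using N0_kt[OF that, of n] unfolding D_def F_def e_def eps_def a_def b_def
    by (simp add: algebra_simps)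
  have Dk: "D (k*n) = eps * D n + e * real n" for n
    using key[of 0 n] by (simp add: F_def)
  have e0: "e = 0"
  proof (rule ccontr)
    assume "e \<noteq> 0"
    then obtain n where n: "B + \<bar>eps\<bar> * B < real n * \<bar>e\<bar>" using ex_less_of_nat_mult[of "\<bar>e\<bar>"] by auto
    have "\<bar>e * real n\<bar> = \<bar>D (k*n) - eps * D n\<bar>" using Dk[of n] by simp
    also have "\<dots> \<le> \<bar>D (k*n)\<bar> + \<bar>eps\<bar> * \<bar>D n\<bar>" by (metis abs_mult abs_triangle_ineq4)
    also have "\<dots> \<le> B + \<bar>eps\<bar> * B" using DB[of "k*n"] DB[of n] by (intro add_mono mult_left_mono) auto
    finally show False using n by (simp add: abs_mult mult.commute)
  qed
  have lk: "length (phi x) = k" if "x \<in> {0,1}" for x using len_phi that by simp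
  have ab: "a \<noteq> b"
  proof
    assume "a = b"
    have c1: "count_list (phi 0) 1 = count_list (phi 1) 1"
      using len_binary[OF set_phi[of 0]] len_binary[OF set_phi[of 1]] lk \<open>a = b\<close> a_def b_def by simp
    have "count_list (phi 0) x = count_list (phi 1) x" for x
    proof -
      consider "x = 0" | "x = 1" | "x \<notin> {0,1}" by auto
      then show ?thesis
      proof cases
        case 3 then have "x \<notin> set (phi 0)" "x \<notin> set (phi 1)" using set_phi by auto
        then show ?thesis by simp
      qed (use \<open>a = b\<close> a_def b_def c1 in auto)
    qed
    then show False using nae by (simp add: abelian_equiv_def)
  qed
  have Fk0: "F 0 k = eps * (1 - r)"
    using e0 lk[of 0] unfolding F_def e_def eps_def a_def by (simp add: algebra_simps)
  have Fk1: "F 1 k = - eps * r"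
    using e0 lk[of 1] unfolding F_def e_def eps_def b_def by (simp add: algebra_simps)
  have F0: "F x 0 = 0" for x by (simp add: F_def)
  have F1: "F x 1 = (if phi x ! 0 = 0 then 1 else 0) - r" if "x \<in> {0,1}" for x
  proof -
    have ne: "phi x \<noteq> []" using lk[OF that] k_ge2 by auto
    show ?thesis using take1[OF ne] unfolding F_def by simp
  qed
  have B0: "B \<ge> 0" using DB[of 0] by simp
  have pk: "factor w 0 k = phi (w 0)" using prefix_k[of 1] by (simp add: factor_def)
  show ?thesis
  proof (cases "\<bar>eps\<bar> \<ge> 2")
    case True
    have Dpow: "D (k^j * n) = eps^j * D n" for j n
    proof (induction j)
      case (Suc j)
      have "D (k^Suc j * n) = D (k * (k^j*n))" by (simp add: mult.assoc)
      then show ?case using Dk[of "k^j*n"] e0 Suc by simp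
    qed simp
    have Dz: "D n = 0" for n
    proof (rule ccontr)
      assume "D n \<noteq> 0"
      then obtain j where j: "B < real j * \<bar>D n\<bar>" using ex_less_of_nat_mult[of "\<bar>D n\<bar>" B] by auto
      have "j \<le> 2^j" using less_exp[of j] by simp
      then have "real j \<le> 2 ^ j" by (metis of_nat_le_iff of_nat_numeral of_nat_power)
      also have "(2::real) ^ j \<le> \<bar>eps\<bar> ^ j" using True by (intro power_mono) auto
      finally have "real j * \<bar>D n\<bar> \<le> \<bar>eps\<bar>^j * \<bar>D n\<bar>" by (intro mult_right_mono) auto
      also have "\<dots> = \<bar>D (k^j*n)\<bar>" using Dpow[of j n] by (simp add: abs_mult power_abs)
      finally show False using j DB[of "k^j*n"] by simp
    qed
    have N1: "count_list (factor w 0 1) 0 = (if w 0 = 0 then 1 else 0)" by (simp add: factor_def)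
    have "D 1 = 0" "D k = 0" using Dz by auto
    then have r1: "r = (if w 0 = 0 then 1 else 0)" and rk: "real (count_list (phi (w 0)) 0) = r * real k"
      using N1 pk unfolding D_def by auto
    show ?thesis
    proof (cases "w 0 = 0")
      case True
      then have "count_list (phi 0) 0 = k" using rk r1 by simp
      then have "count_list (phi 0) 1 = 0" using len_binary[OF set_phi[of 0]] lk[of 0] by simp
      then show ?thesis using not_const0 by (simp add: count_list_0_iff)
    next
      case False
      then have "w 0 = 1" using w01[of 0] by auto
      then have "count_list (phi 1) 0 = 0" using rk r1 by simp
      then show ?thesis using not_const1 by (simp add: count_list_0_iff)
    qed
  next
    case False
    have "a = b + 1 \<or> b = a + 1 \<or> a \<ge> b+2 \<or> b \<ge> a+2" using ab by arith
    then have epsc: "eps = 1 \<or> eps = -1"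
    proof (elim disjE)
      assume "a \<ge> b+2" then have "real a \<ge> real b + 2" by linarith
      then show ?thesis using False eps_def by simp
    next
      assume "b \<ge> a+2" then have "real b \<ge> real a + 2" by linarith
      then show ?thesis using False eps_def by simp
    qed (auto simp: eps_def)
    define q where "q = real k - eps"
    have q0: "q > 0" using epsc k_ge2 q_def by auto
    have bq: "real b = r * q" using e0 e_def q_def by simp
    have rpos: "r > 0"
    proof (rule ccontr)
      assume "\<not> r > 0"
      then have "real b \<le> 0" using bq q0 by (simp add: mult_nonpos_nonneg)
      then have "count_list (phi 1) 0 = 0" using b_def by simp
      then show False using not_const1 by (simp add: count_list_0_iff)
    qed
    have rlt: "r < 1"
    proof (rule ccontr)
      assume "\<not> r < 1"
      then have "real b \<ge> q" using bq q0 by (simp add: mult_le_cancel_right1 )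
      then have "real a \<ge> real k" using q_def eps_def by simp
      moreover have "a \<le> k" using count_le_length[of "phi 0" 0] lk[of 0] a_def by simp
      ultimately have "count_list (phi 0) 0 = k" using a_def by simp
      then have "count_list (phi 0) 1 = 0" using len_binary[OF set_phi[of 0]] lk[of 0] by simp
      then show False using not_const0 by (simp add: count_list_0_iff)
    qed
    define Q where "Q = int k - (int a - int b)"
    have Qq: "real_of_int Q = q" using Q_def q_def eps_def by simp
    define z where "z n = int (count_list (factor w 0 n) 0) * Q - int b * int n" for n
    have zD: "real_of_int (z n) = q * D n" for n
      unfolding z_def D_def using Qq bq by (simp add: algebra_simps)
    define M where "M = \<lceil>q * B\<rceil>"
    have zb: "z n \<in> {-M..M}" for n
    proof -
      have "\<bar>real_of_int (z n)\<bar> \<le> q * B" using zD[of n] DB[of n] q0 by (simp add: abs_mult)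
      then show ?thesis unfolding M_def by (simp add: abs_le_iff) linarith
    qed
    have fin: "finite (D ` S)" for S
    proof -
      have "D ` S \<subseteq> (\<lambda>x. real_of_int x / q) ` {-M..M}"
      proof
        fix y assume "y \<in> D ` S"
        then obtain n where "y = D n" by auto
        then have "y = real_of_int (z n) / q" using zD[of n] q0 by simp
        then show "y \<in> (\<lambda>x. real_of_int x / q) ` {-M..M}" using zb[of n] by blast
      qed
      then show ?thesis by (rule finite_subset) simp
    qed
    obtain nmin where nmin: "\<forall>m. D nmin \<le> D m" using ext_min[OF fin[of UNIV], of 0] by auto
    obtain nmax where nmax: "\<forall>m. D m \<le> D nmax" using ext_max[OF fin[of UNIV], of 0] by auto
    have keyt: "D (k*n+t) = eps * D n + F (w n) t" if "t \<le> k" for n t using key[OF that] e0 by simp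
    show ?thesis
    proof (cases "eps = 1")
      case False
      then have em: "eps = -1" using epsc by simp
      have s1: "- D nmin \<le> D nmax"
      proof -
        have "D (k*nmin) = - D nmin" using keyt[of 0 nmin] em F0 by simp
        then show ?thesis using nmax by metis
      qed
      have s2: "- D nmax \<ge> D nmin"
      proof -
        have "D (k*nmax) = - D nmax" using keyt[of 0 nmax] em F0 by simp
        then show ?thesis using nmin by metis
      qed
      have fx: "F (w nmin) t \<le> 0" if "t \<le> k" for t
        using keyt[OF that, of nmin] nmax[rule_format, of "k*nmin+t"] em s1 s2 by simp
      have fy: "F (w nmax) t \<ge> 0" if "t \<le> k" for t
        using keyt[OF that, of nmax] nmin[rule_format, of "k*nmax+t"] em s1 s2 by simp
      have x0: "w nmin = 0"
      proof (rule ccontr)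
        assume "w nmin \<noteq> 0" then have "w nmin = 1" using w01[of nmin] by auto
        then show False using fx[of k] Fk1 em rpos by simp
      qed
      have y1: "w nmax = 1"
      proof (rule ccontr)
        assume "w nmax \<noteq> 1" then have "w nmax = 0" using w01[of nmax] by auto
        then show False using fy[of k] Fk0 em rlt by simp
      qed
      have "phi 0 ! 0 \<noteq> 0" using fx[of 1] x0 F1[of 0] rlt k_ge2 by (auto split: if_splits)
      moreover have "phi 1 ! 0 = 0" using fy[of 1] y1 F1[of 1] rpos k_ge2 by (auto split: if_splits)
      ultimately show ?thesis using w0 w01[of 0] by auto
    next
      case True
      have fx: "F (w nmin) t \<ge> 0" if "t \<le> k" for t
        using keyt[OF that, of nmin] nmin[rule_format, of "k*nmin+t"] True by simp
      have fy: "F (w nmax) t \<le> 0" if "t \<le> k" for t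
        using keyt[OF that, of nmax] nmax[rule_format, of "k*nmax+t"] True by simp
      have x0: "w nmin = 0"
      proof (rule ccontr)
        assume "w nmin \<noteq> 0" then have "w nmin = 1" using w01[of nmin] by auto
        then show False using fx[of k] Fk1 True rpos by simp
      qed
      have y1: "w nmax = 1"
      proof (rule ccontr)
        assume "w nmax \<noteq> 1" then have "w nmax = 0" using w01[of nmax] by auto
        then show False using fy[of k] Fk0 True rlt by simp
      qed
      obtain n0 where n0: "n0 \<in> {n. w n = 0}" "\<forall>m\<in>{n. w n = 0}. D m \<le> D n0"
        using ext_max[OF fin[of "{n. w n = 0}"], of nmin] x0 by auto
      obtain n1 where n1: "n1 \<in> {n. w n = 1}" "\<forall>m\<in>{n. w n = 1}. D n1 \<le> D m"
        using ext_min[OF fin[of "{n. w n = 1}"], of nmax] y1 by auto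
      have b0: "F 0 t \<le> 0" if "t < k" "phi 0 ! t = 0" for t
      proof -
        have "w (k*n0+t) = 0" using w_kt[OF that(1), of n0] n0(1) that(2) by simp
        then have "D (k*n0+t) \<le> D n0" using n0(2) by simp
        then show ?thesis using keyt[of t n0] that(1) True n0(1) by simp
      qed
      have b1: "F 1 t \<ge> 0" if "t < k" "phi 1 ! t = 1" for t
      proof -
        have "w (k*n1+t) = 1" using w_kt[OF that(1), of n1] n1(1) that(2) by simp
        then have "D n1 \<le> D (k*n1+t)" using n1(2) by simp
        then show ?thesis using keyt[of t n1] that(1) True n1(1) by simp
      qed
      show ?thesis
        apply (rule shape[OF lk[of 0] lk[of 1] k_ge2 set_phi[of 0] set_phi[of 1] rpos rlt])
        using fx x0 fy y1 b0 b1 Fk0 True lk[of 0] unfolding F_def by auto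
    qed
  qed
qed

end


lemma dir21:
  assumes "binary_infinite_word w" "abelian_periodic w"
  shows "bounded_weak_abelian_periodic w"
proof -
  obtain p where p: "strict_mono p" "\<forall>i j. abelian_equiv (block w p i) (block w p j)"
    using assms(2) by (auto simp: abelian_periodic_def)
  have sb: "set (block w p i) \<subseteq> {0,1}" for i
    using assms(1) unfolding block_def factor_def binary_infinite_word_def set_map image_subset_iff by blast
  have len: "length (block w p i) = length (block w p j)" for i j
  proof -
    have "\<forall>a. count_list (block w p i) a = count_list (block w p j) a" using p(2) by (simp add: abelian_equiv_def)
    then show ?thesis using len_binary[OF sb[of i]] len_binary[OF sb[of j]] by simp
  qed
  have "rho a (block w p i) = rho a (block w p j)" for i j a
    using len[of i j] p(2) by (simp add: abelian_equiv_def rho_def)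
  then show ?thesis unfolding bounded_weak_abelian_periodic_def
    using p(1) len by (metis order_refl)
qed

theorem theorem2:
  fixes phi :: "nat \<Rightarrow> nat list" and k :: nat and w :: "nat \<Rightarrow> nat"
  assumes "binary_morphism phi"
    and "uniform_morphism k phi"
    and "primitive_morphism phi"
    and "binary_infinite_word w"
    and "fixed_point phi w"
  shows "(bounded_weak_abelian_periodic w \<longleftrightarrow> abelian_periodic w)
       \<and> (abelian_periodic w \<longleftrightarrow>
            (abelian_equiv (phi 0) (phi 1)
             \<or> (odd k \<and> phi 0 = concat (replicate ((k - 1) div 2) [0, 1]) @ [0]
                      \<and> phi 1 = concat (replicate ((k - 1) div 2) [1, 0]) @ [1])))"
proof -
  interpret fpw phi k w using assms by unfold_locales
  have h13: "abelian_equiv (phi 0) (phi 1)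
             \<or> (odd k \<and> phi 0 = concat (replicate ((k - 1) div 2) [0, 1]) @ [0]
                      \<and> phi 1 = concat (replicate ((k - 1) div 2) [1, 0]) @ [1])"
    if "bounded_weak_abelian_periodic w" using hard[OF that] by blast
  have h32: "abelian_periodic w" if "abelian_equiv (phi 0) (phi 1)
             \<or> (odd k \<and> phi 0 = concat (replicate ((k - 1) div 2) [0, 1]) @ [0]
                      \<and> phi 1 = concat (replicate ((k - 1) div 2) [1, 0]) @ [1])"
    using that dir3_ab dir3_sp by blast
  have h21: "bounded_weak_abelian_periodic w" if "abelian_periodic w"
    using dir21[OF assms(4) that] .
  show ?thesis using h13 h32 h21 by blast
qed

end
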